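(* Let $T$ be a measure-preserving map on the probability space $(X,\mathcal{A},\mu)$, $(A_l)$ a sequence of asymptotically rare events, $(\nu_l)$ a sequence in $\mathfrak{P}$, and $\tau_l:X\to\mathbb{N}_0$, $l\ge1$, measurable functions. a) $(\tau_l)$ is an admissible delay sequence for the variables $R_l:=\mu(A_l)\Phi_{A_l}:X\to[0,\infty]^{\mathbb{N}_0}$ and the measures $\nu_l$ provided that $\mu(A_l)\tau_l\to0$ in $\nu_l$-probability and $\nu_l(\tau_l<\varphi_{A_l})\to1$ as $l\to\infty$. b) The condition $\nu_l(\tau_l<\varphi_{A_l})\to1$ alone suffices for $(\tau_l)$ to be an admissible delay sequence for the variables $R_l:=\mu(A_l)\Phi_{A_l}\circ T_{A_l}:X\to[0,\infty]^{\mathbb{N}}$ and the $\nu_l$.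
   Context: For $A$ with $\mu(A)>0$: $\varphi_A(x):=\inf\{n\ge1:T^nx\in A\}$, $T_Ax:=T^{\varphi_A(x)}x$, $\Phi_A:=(\varphi_A,\varphi_A\circ T_A,\ldots)$; $[0,\infty]$ metrized by $|e^{-s}-e^{-t}|$, sequence spaces with the product metric $\sum_j2^{-(j+1)}d(s^{(j)},t^{(j)})$. Asymptotically rare: $0<\mu(A_l)\to0$. $\mathfrak{P}$: probabilities $\nu\ll\mu$. $T^\tau x:=T^{\tau(x)}x$. For Borel maps $R_l$ into a compact metric space $\mathfrak{E}$ and probabilities $\nu_l$, $(\tau_l)$ is an admissible delay sequence for $(R_l)$ and $(\nu_l)$ if $D_{\mathfrak{E}}(\nu_l\circ R_l^{-1},\nu_l\circ(R_l\circ T^{\tau_l})^{-1})\to0$, where $D_{\mathfrak{E}}(Q,Q')=\sum_{j\ge1}2^{-(j+1)}|\int\chi_j\,dQ-\int\chi_j\,dQ'|$ for a fixed sequence of Lipschitz $\chi_j$, $|\chi_j|\le1$, obtained by normalizing a dense sequence in $\mathcal{C}(\mathfrak{E})$ (a metric for weak convergence). *)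

theory Defs
  imports "HOL-Probability.Probability"
begin

definition hit :: "('a \<Rightarrow> 'a) \<Rightarrow> 'a set \<Rightarrow> 'a \<Rightarrow> enat" where
  "hit T A x = (if \<exists>n\<ge>1. (T ^^ n) x \<in> A
                then enat (LEAST n. n \<ge> 1 \<and> (T ^^ n) x \<in> A) else \<infinity>)"

definition retmap :: "('a \<Rightarrow> 'a) \<Rightarrow> 'a set \<Rightarrow> 'a \<Rightarrow> 'a" where
  "retmap T A x = (case hit T A x of enat n \<Rightarrow> (T ^^ n) x | \<infinity> \<Rightarrow> x)"

definition Phi :: "('a \<Rightarrow> 'a) \<Rightarrow> 'a set \<Rightarrow> 'a \<Rightarrow> nat \<Rightarrow> enat" where
  "Phi T A x j = hit T A ((retmap T A ^^ j) x)"

definition eneg :: "ennreal \<Rightarrow> real" where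
  "eneg s = (if s = \<infinity> then 0 else exp (- enn2real s))"

definition seq_dist :: "(nat \<Rightarrow> ennreal) \<Rightarrow> (nat \<Rightarrow> ennreal) \<Rightarrow> real" where
  "seq_dist s t = (\<Sum>j. (1/2) ^ (j + 1) * \<bar>eneg (s j) - eneg (t j)\<bar>)"

definition seq_continuous :: "((nat \<Rightarrow> ennreal) \<Rightarrow> real) \<Rightarrow> bool" where
  "seq_continuous f \<longleftrightarrow>
     (\<forall>s. \<forall>e>0. \<exists>d>0. \<forall>t. seq_dist s t < d \<longrightarrow> \<bar>f s - f t\<bar> < e)"

definition seq_lipschitz :: "((nat \<Rightarrow> ennreal) \<Rightarrow> real) \<Rightarrow> bool" where
  "seq_lipschitz f \<longleftrightarrow> (\<exists>L. \<forall>s t. \<bar>f s - f t\<bar> \<le> L * seq_dist s t)"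

definition chi_system :: "(nat \<Rightarrow> (nat \<Rightarrow> ennreal) \<Rightarrow> real) \<Rightarrow> bool" where
  "chi_system chi \<longleftrightarrow>
     (\<exists>g. (\<forall>j. seq_continuous (g j)) \<and>
          (\<forall>f. seq_continuous f \<longrightarrow> (\<forall>e>0. \<exists>j. \<forall>s. \<bar>f s - g j s\<bar> < e)) \<and>
          (\<forall>j s. chi j s = g j s / (SUP t. \<bar>g j t\<bar>))) \<and>
     (\<forall>j. seq_lipschitz (chi j) \<and> (\<forall>s. \<bar>chi j s\<bar> \<le> 1))"

text \<open>D_E(nu o R^-1, nu o R'^-1), integrals against image measures written as integrals over nu.\<close>
definition DE :: "(nat \<Rightarrow> (nat \<Rightarrow> ennreal) \<Rightarrow> real) \<Rightarrow> 'a measure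
                  \<Rightarrow> ('a \<Rightarrow> nat \<Rightarrow> ennreal) \<Rightarrow> ('a \<Rightarrow> nat \<Rightarrow> ennreal) \<Rightarrow> real" where
  "DE chi \<nu> R R' = (\<Sum>j. (1/2) ^ (j + 1) *
       \<bar>(\<integral>x. chi j (R x) \<partial>\<nu>) - (\<integral>x. chi j (R' x) \<partial>\<nu>)\<bar>)"

definition admissible_delay ::
  "('a \<Rightarrow> 'a) \<Rightarrow> (nat \<Rightarrow> (nat \<Rightarrow> ennreal) \<Rightarrow> real) \<Rightarrow> (nat \<Rightarrow> 'a \<Rightarrow> nat \<Rightarrow> ennreal)
     \<Rightarrow> (nat \<Rightarrow> 'a measure) \<Rightarrow> (nat \<Rightarrow> 'a \<Rightarrow> nat) \<Rightarrow> bool" where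
  "admissible_delay T chi R \<nu> \<tau> \<longleftrightarrow>
     (\<lambda>l. DE chi (\<nu> l) (R l) (\<lambda>x. R l ((T ^^ \<tau> l x) x))) \<longlonglongrightarrow> 0"

definition measure_preserving_map :: "'a measure \<Rightarrow> ('a \<Rightarrow> 'a) \<Rightarrow> bool" where
  "measure_preserving_map M T \<longleftrightarrow> T \<in> measurable M M \<and> distr M M T = M"

definition asymp_rare :: "'a measure \<Rightarrow> (nat \<Rightarrow> 'a set) \<Rightarrow> bool" where
  "asymp_rare M A \<longleftrightarrow> (\<forall>l. A l \<in> sets M \<and> 0 < measure M (A l)) \<and>
                       (\<lambda>l. measure M (A l)) \<longlonglongrightarrow> 0"

definition Pfrak :: "'a measure \<Rightarrow> 'a measure set" where
  "Pfrak M = {\<nu>. prob_space \<nu> \<and> sets \<nu> = sets M \<and> absolutely_continuous M \<nu>}"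

end

theory Submission
  imports Defs
begin


lemma hit_enat_iff:
  "hit T A x = enat h \<longleftrightarrow> 1 \<le> h \<and> (T ^^ h) x \<in> A \<and> (\<forall>m. 1 \<le> m \<and> m < h \<longrightarrow> (T ^^ m) x \<notin> A)"
proof
  assume H: "hit T A x = enat h"
  then have ex: "\<exists>n\<ge>1. (T ^^ n) x \<in> A" and hd: "h = (LEAST n. n \<ge> 1 \<and> (T ^^ n) x \<in> A)"
    unfolding hit_def by (auto split: if_splits)
  from ex obtain n where "n \<ge> 1 \<and> (T ^^ n) x \<in> A" by blast
  then have "h \<ge> 1 \<and> (T ^^ h) x \<in> A" unfolding hd by (rule LeastI)
  moreover have "\<forall>m. 1 \<le> m \<and> m < h \<longrightarrow> (T ^^ m) x \<notin> A"
    using not_less_Least hd by blast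
  ultimately show "1 \<le> h \<and> (T ^^ h) x \<in> A \<and> (\<forall>m. 1 \<le> m \<and> m < h \<longrightarrow> (T ^^ m) x \<notin> A)" by blast
next
  assume H: "1 \<le> h \<and> (T ^^ h) x \<in> A \<and> (\<forall>m. 1 \<le> m \<and> m < h \<longrightarrow> (T ^^ m) x \<notin> A)"
  then have ex: "\<exists>n\<ge>1. (T ^^ n) x \<in> A" by blast
  have "(LEAST n. n \<ge> 1 \<and> (T ^^ n) x \<in> A) = h"
    by (rule Least_equality) (use H in \<open>auto simp: not_less[symmetric]\<close>)
  then show "hit T A x = enat h" using ex unfolding hit_def by simp
qed

lemma hit_inf_iff: "hit T A x = \<infinity> \<longleftrightarrow> (\<forall>n\<ge>1. (T ^^ n) x \<notin> A)"
  unfolding hit_def by auto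

lemma retmap_inf: "hit T A y = \<infinity> \<Longrightarrow> (retmap T A ^^ j) y = y"
  by (induction j) (auto simp: retmap_def)

lemma Phi_Suc: "Phi T A x (Suc j) = Phi T A (retmap T A x) j"
  unfolding Phi_def by (simp add: funpow_Suc_right del: funpow.simps)

lemma hit_shift:
  assumes "enat k < hit T A x"
  shows "hit T A ((T ^^ k) x) = hit T A x - enat k"
    and "Phi T A (retmap T A ((T ^^ k) x)) j = Phi T A (retmap T A x) j"
proof -
  have "hit T A ((T ^^ k) x) = hit T A x - enat k \<and>
        Phi T A (retmap T A ((T ^^ k) x)) j = Phi T A (retmap T A x) j"
  proof (cases "hit T A x")
    case (enat h)
    then have H: "1 \<le> h" "(T ^^ h) x \<in> A" "\<And>m. 1 \<le> m \<Longrightarrow> m < h \<Longrightarrow> (T ^^ m) x \<notin> A"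
      using hit_enat_iff by metis+
    have kh: "k < h" using assms enat by simp
    have c: "\<And>m. (T ^^ m) ((T ^^ k) x) = (T ^^ (m + k)) x" by (simp add: funpow_add)
    have h2: "hit T A ((T ^^ k) x) = enat (h - k)"
      unfolding hit_enat_iff c using H kh
      by (auto simp: not_less)
    have "retmap T A ((T ^^ k) x) = retmap T A x"
      unfolding retmap_def h2 enat using c kh by simp
    then show ?thesis using h2 enat by simp
  next
    case infinity
    then have H: "\<forall>n\<ge>1. (T ^^ n) x \<notin> A" using hit_inf_iff by metis
    have "hit T A ((T ^^ k) x) = \<infinity>"
      unfolding hit_inf_iff using H by (metis funpow_add comp_apply le_add1 order_trans)
    moreover have "Phi T A (retmap T A ((T ^^ k) x)) j = \<infinity>"
      using calculation unfolding Phi_def retmap_def by (simp add: retmap_inf[unfolded retmap_def])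
    moreover have "Phi T A (retmap T A x) j = \<infinity>"
      using infinity unfolding Phi_def retmap_def by (simp add: retmap_inf[unfolded retmap_def])
    ultimately show ?thesis using infinity by simp
  qed
  then show "hit T A ((T ^^ k) x) = hit T A x - enat k"
    and "Phi T A (retmap T A ((T ^^ k) x)) j = Phi T A (retmap T A x) j" by auto
qed



lemma funpow_meas: "T \<in> measurable M M \<Longrightarrow> (T ^^ n) \<in> measurable M M"
  by (induction n) (auto intro: measurable_comp)

lemma hit_meas:
  assumes T: "T \<in> measurable M M" and A: "A \<in> sets M"
  shows "hit T A \<in> measurable M (count_space UNIV)"
proof (subst measurable_count_space_eq2_countable, intro conjI ballI)
  show "hit T A \<in> space M \<rightarrow> UNIV" by simp
  fix a :: enat
  have pm: "\<And>n. {x \<in> space M. (T ^^ n) x \<in> A} \<in> sets M"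
    using measurable_sets[OF funpow_meas[OF T] A] by (simp add: vimage_def Int_def conj_commute)
  show "hit T A -` {a} \<inter> space M \<in> sets M"
  proof (cases a)
    case (enat h)
    have "hit T A -` {a} \<inter> space M = (if 1 \<le> h then {x \<in> space M. (T ^^ h) x \<in> A} \<inter>
       (\<Inter>m\<in>{1..<h}. space M - {x \<in> space M. (T ^^ m) x \<in> A}) else {})"
      unfolding enat using hit_enat_iff[of T A _ h] by auto
    then show ?thesis using pm by auto
  next
    case infinity
    have "hit T A -` {a} \<inter> space M = space M \<inter> (\<Inter>m\<in>{1..}. space M - {x \<in> space M. (T ^^ m) x \<in> A})"
      unfolding infinity using hit_inf_iff[of T A] by auto
    then show ?thesis using pm by auto
  qed
qed

lemma retmap_meas:
  assumes T: "T \<in> measurable M M" and A: "A \<in> sets M"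
  shows "retmap T A \<in> measurable M M"
proof -
  have "(\<lambda>x. (\<lambda>i x. case i of enat n \<Rightarrow> (T ^^ n) x | \<infinity> \<Rightarrow> x) (hit T A x) x) \<in> measurable M M"
  proof (rule measurable_compose_countable[OF _ hit_meas[OF T A]])
    fix i :: enat show "(\<lambda>x. case i of enat n \<Rightarrow> (T ^^ n) x | \<infinity> \<Rightarrow> x) \<in> measurable M M"
      by (cases i) (auto simp: funpow_meas[OF T, unfolded comp_def])
  qed
  then show ?thesis unfolding retmap_def[abs_def] by simp
qed

lemma Phi_meas:
  assumes T: "T \<in> measurable M M" and A: "A \<in> sets M"
  shows "(\<lambda>x. Phi T A x j) \<in> measurable M (count_space UNIV)"
  unfolding Phi_def
  using measurable_comp[OF funpow_meas[OF retmap_meas[OF T A]] hit_meas[OF T A]]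
  by (simp add: comp_def)

lemma shift_meas:
  assumes T: "T \<in> measurable M M" and t: "t \<in> measurable M (count_space UNIV)"
  shows "(\<lambda>x. (T ^^ t x) x) \<in> measurable M M"
  by (rule measurable_compose_countable[OF _ t]) (rule funpow_meas[OF T, unfolded comp_def])

lemma trunc_meas:
  fixes P :: "'a \<Rightarrow> nat \<Rightarrow> enat"
  assumes P: "\<And>j. (\<lambda>x. P x j) \<in> measurable M (count_space UNIV)"
  shows "(\<lambda>x. (h (\<lambda>j. if j < n then P x j else 0) :: real)) \<in> borel_measurable M"
proof (induction n arbitrary: h)
  case 0
  then show ?case by simp
next
  case (Suc n)
  have eq: "(\<lambda>x. h (\<lambda>j. if j < Suc n then P x j else 0)) =
        (\<lambda>x. (\<lambda>i x. h ((\<lambda>j. if j < n then P x j else 0)(n := i))) (P x n) x)"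
    by (auto intro!: ext arg_cong[where f=h] simp: less_Suc_eq)
  show ?case unfolding eq
    by (rule measurable_compose_countable[OF _ P]) (rule Suc.IH)
qed


lemma eneg_bounds: "0 \<le> eneg s" "eneg s \<le> 1"
  unfolding eneg_def by auto

lemma eneg_diff: "\<bar>eneg a - eneg b\<bar> \<le> 1"
  using eneg_bounds[of a] eneg_bounds[of b] by (simp add: abs_le_iff)

lemma seq_dist_summable: "summable (\<lambda>j. (1/2::real) ^ (j + 1) * \<bar>eneg (s j) - eneg (t j)\<bar>)"
proof (rule summable_comparison_test[where g="\<lambda>j. (1/2::real) ^ (j + 1)"])
  show "\<exists>N. \<forall>n\<ge>N. norm ((1/2::real) ^ (n + 1) * \<bar>eneg (s n) - eneg (t n)\<bar>) \<le> (1/2) ^ (n + 1)"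
    by (intro exI[of _ 0] allI impI) (auto simp: abs_mult intro!: mult_left_le_one_le eneg_diff)
  show "summable (\<lambda>j. (1/2::real) ^ (j + 1))" using power_half_series sums_summable by simp
qed


lemma seq_dist_nonneg: "0 \<le> seq_dist s t"
  unfolding seq_dist_def by (rule suminf_nonneg[OF seq_dist_summable]) simp


lemma seq_dist_trunc:
  assumes "\<And>j. j < n \<Longrightarrow> s j = t j"
  shows "seq_dist s t \<le> (1/2) ^ n"
proof -
  let ?f = "\<lambda>j. (1/2::real) ^ (j + 1) * \<bar>eneg (s j) - eneg (t j)\<bar>"
  have "seq_dist s t = (\<Sum>j. ?f (j + n)) + sum ?f {..<n}"
    unfolding seq_dist_def by (rule suminf_split_initial_segment[OF seq_dist_summable])
  also have "sum ?f {..<n} = 0" using assms by simp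
  also have "(\<Sum>j. ?f (j + n)) \<le> (\<Sum>j. (1/2) ^ n * (1/2::real) ^ (j + 1))"
  proof (rule suminf_le)
    fix j
    have "\<bar>eneg (s (j+n)) - eneg (t (j+n))\<bar> \<le> 1"
      by (rule eneg_diff)
    then show "?f (j + n) \<le> (1/2) ^ n * (1/2::real) ^ (j + 1)"
      by (auto simp: power_add intro!: mult_left_le_one_le)
    show "summable (\<lambda>j. ?f (j + n))"
      by (subst summable_iff_shift) (rule seq_dist_summable)
    show "summable (\<lambda>j. (1/2) ^ n * (1/2::real) ^ (j + 1))"
      using power_half_series sums_summable summable_mult by simp
  qed
  also have "(\<Sum>j. (1/2) ^ n * (1/2::real) ^ (j + 1)) = (1/2) ^ n"
    using sums_unique[OF sums_mult[OF power_half_series, of "(1/2)^n"]] by simp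
  finally show ?thesis by simp
qed


lemma seq_dist_first:
  assumes "\<And>j. s (Suc j) = t (Suc j)"
  shows "seq_dist s t = (1/2) * \<bar>eneg (s 0) - eneg (t 0)\<bar>"
proof -
  have "(\<lambda>j. (1/2::real) ^ (j + 1) * \<bar>eneg (s j) - eneg (t j)\<bar>) =
        (\<lambda>j. if j = 0 then (1/2::real) ^ (j + 1) * \<bar>eneg (s j) - eneg (t j)\<bar> else 0)" (is "?l = ?r")
    proof (rule ext)
    fix j show "?l j = ?r j" using assms by (cases j) simp_all
  qed
  then have "seq_dist s t = suminf ?r" unfolding seq_dist_def by simp
  also have "?r sums (?l 0)" using sums_single[of 0 ?l] by simp
  then have "suminf ?r = ?l 0" by (rule sums_unique[symmetric])
  finally show ?thesis by simp
qed


lemma lip_bound: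
  assumes "seq_lipschitz c"
  obtains L where "L \<ge> 0" "\<And>s t. \<bar>c s - c t\<bar> \<le> L * seq_dist s t"
proof -
  obtain L where L: "\<And>s t. \<bar>c s - c t\<bar> \<le> L * seq_dist s t" using assms unfolding seq_lipschitz_def by blast
  have "\<bar>c s - c t\<bar> \<le> max L 0 * seq_dist s t" for s t
    using L[of s t] seq_dist_nonneg[of s t] by (smt (verit) mult_right_mono)
  then show ?thesis using that[of "max L 0"] by simp
qed


lemma chi_meas:
  fixes P :: "'a \<Rightarrow> nat \<Rightarrow> enat"
  assumes c: "seq_lipschitz c" and P: "\<And>j. (\<lambda>x. P x j) \<in> measurable M (count_space UNIV)"
  shows "(\<lambda>x. c (\<lambda>j. a * ennreal_of_enat (P x j))) \<in> borel_measurable M"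
proof (rule borel_measurable_LIMSEQ_real)
  obtain L where L: "L \<ge> 0" "\<And>s t. \<bar>c s - c t\<bar> \<le> L * seq_dist s t" using lip_bound[OF c] by blast
  let ?u = "\<lambda>n x. c (\<lambda>j. a * ennreal_of_enat (if j < n then P x j else 0))"
  show "?u n \<in> borel_measurable M" for n
    using trunc_meas[OF P, where h="\<lambda>e. c (\<lambda>j. a * ennreal_of_enat (e j))" and n=n] by simp
  fix x
  let ?s = "\<lambda>j. a * ennreal_of_enat (P x j)"
  have "(\<lambda>n. ?u n x - c ?s) \<longlonglongrightarrow> 0"
  proof (rule Lim_null_comparison)
    show "\<forall>\<^sub>F n in sequentially. norm (?u n x - c ?s) \<le> L * (1/2) ^ n"
    proof (intro always_eventually allI)
      fix n
      have "norm (?u n x - c ?s) \<le> L * seq_dist (\<lambda>j. a * ennreal_of_enat (if j < n then P x j else 0)) ?s"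
        using L(2) by simp
      also have "\<dots> \<le> L * (1/2) ^ n"
        by (rule mult_left_mono[OF seq_dist_trunc L(1)]) simp
      finally show "norm (?u n x - c ?s) \<le> L * (1/2) ^ n" .
    qed
    show "(\<lambda>n. L * (1/2::real) ^ n) \<longlonglongrightarrow> 0"
      by (intro tendsto_mult_right_zero LIMSEQ_power_zero) simp
  qed
  then have "(\<lambda>n. ?u n x - c ?s + c ?s) \<longlonglongrightarrow> 0 + c ?s" by (intro tendsto_add) auto
  then show "(\<lambda>n. ?u n x) \<longlonglongrightarrow> c ?s" by simp
qed


lemma series_tendsto:
  fixes a :: "nat \<Rightarrow> nat \<Rightarrow> real"
  assumes b: "\<And>l j. \<bar>a l j\<bar> \<le> 2" and t: "\<And>j. (\<lambda>l. a l j) \<longlonglongrightarrow> 0"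
  shows "(\<lambda>l. \<Sum>j. (1/2) ^ (j + 1) * \<bar>a l j\<bar>) \<longlonglongrightarrow> 0"
proof -
  have "((\<lambda>l. \<Sum>j. (1/2) ^ (j + 1) * \<bar>a l j\<bar>) \<longlongrightarrow> (\<Sum>j. (0::real))) sequentially"
  proof (rule tannerys_theorem[where M="\<lambda>j. 2 * (1/2::real) ^ (j + 1)", THEN conjunct2, THEN conjunct2])
    show "((\<lambda>l. (1/2) ^ (j + 1) * \<bar>a l j\<bar>) \<longlongrightarrow> 0) sequentially" for j
      using tendsto_mult_right_zero[OF tendsto_rabs_zero[OF t[of j]]] by simp
    show "\<forall>\<^sub>F (j, l) in sequentially \<times>\<^sub>F sequentially. norm ((1/2::real) ^ (j + 1) * \<bar>a l j\<bar>) \<le> 2 * (1/2) ^ (j + 1)"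
      using b by (intro always_eventually) (auto simp: mult.commute intro!: mult_right_mono)
    show "summable (\<lambda>j. 2 * (1/2::real) ^ (j + 1))"
      using power_half_series sums_summable summable_mult by simp
  qed simp
  then show ?thesis by simp
qed


lemma int_diff_bound:
  fixes f g :: "'a \<Rightarrow> real"
  assumes N: "prob_space N" and f: "f \<in> borel_measurable N" and g: "g \<in> borel_measurable N"
    and fb: "\<And>x. \<bar>f x\<bar> \<le> 1" and gb: "\<And>x. \<bar>g x\<bar> \<le> 1"
    and B: "B \<in> sets N" and c: "0 \<le> c" and d: "\<And>x. x \<in> space N \<Longrightarrow> x \<notin> B \<Longrightarrow> \<bar>f x - g x\<bar> \<le> c"
  shows "\<bar>(\<integral>x. f x \<partial>N) - (\<integral>x. g x \<partial>N)\<bar> \<le> 2 * measure N B + c"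
proof -
  interpret prob_space N by (rule N)
  have fi: "integrable N f" by (rule integrable_const_bound[where B=1]) (use fb f in auto)
  have gi: "integrable N g" by (rule integrable_const_bound[where B=1]) (use gb g in auto)
  have hi: "integrable N (\<lambda>x. 2 * indicator B x + c)"
    using B by (simp add: less_top[symmetric])
  have "\<bar>(\<integral>x. f x \<partial>N) - (\<integral>x. g x \<partial>N)\<bar> = \<bar>\<integral>x. f x - g x \<partial>N\<bar>"
    using fi gi by simp
  also have "\<dots> \<le> (\<integral>x. \<bar>f x - g x\<bar> \<partial>N)" by (rule integral_abs_bound)
  also have "\<dots> \<le> (\<integral>x. 2 * indicator B x + c \<partial>N)"
  proof (rule integral_mono)
    show "integrable N (\<lambda>x. \<bar>f x - g x\<bar>)" using fi gi by auto
    show "integrable N (\<lambda>x. 2 * indicator B x + c)" by (rule hi)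
    fix x assume x: "x \<in> space N"
    show "\<bar>f x - g x\<bar> \<le> 2 * indicator B x + c"
    proof (cases "x \<in> B")
      case True then show ?thesis using fb[of x] gb[of x] c by (auto simp: abs_le_iff)
    next
      case False then show ?thesis using d[OF x] by simp
    qed
  qed
  also have "\<dots> = 2 * measure N B + c"
    using B by (simp add: integral_add less_top[symmetric] prob_space)
  finally show ?thesis .
qed



lemma exp_diff:
  fixes a b :: real
  assumes "0 \<le> a" "a \<le> b"
  shows "\<bar>exp (- a) - exp (- b)\<bar> \<le> b - a"
proof -
  define q where "q = exp (- (b - a))"
  have E: "exp (- b) = exp (- a) * q" unfolding q_def by (simp add: exp_add[symmetric])
  have q1: "1 - (b - a) \<le> q" unfolding q_def using exp_ge_add_one_self[of "-(b-a)"] by linarith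
  have q2: "q \<le> 1" unfolding q_def using assms by simp
  have a1: "exp (- a) \<le> 1" "0 < exp (-a)" using assms by auto
  have D: "exp (- a) - exp (- b) = exp (- a) * (1 - q)" by (simp add: E algebra_simps)
  have "exp (- a) * (1 - q) \<le> 1 - q" by (rule mult_left_le_one_le) (use q2 a1 in auto)
  moreover have "0 \<le> exp (- a) * (1 - q)" using q2 a1 by simp
  ultimately show ?thesis using D q1 by simp
qed

lemma eneg_coord0:
  fixes h :: enat and mu :: real
  assumes mu: "0 < mu" and k: "enat k < h"
  shows "\<bar>eneg (ennreal mu * ennreal_of_enat h) - eneg (ennreal mu * ennreal_of_enat (h - enat k))\<bar> \<le> mu * k"
proof (cases h)
  case (enat n)
  have kn: "k < n" using k enat by simp
  have e: "\<And>m. ennreal mu * ennreal_of_enat (enat m) = ennreal (mu * m)"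
    using mu by (simp add: ennreal_of_nat_eq_real_of_nat ennreal_mult)
  have e2: "\<And>m::nat. eneg (ennreal (mu * m)) = exp (- (mu * m))"
    using mu by (simp add: eneg_def)
  have "\<bar>exp (- (mu * real (n - k))) - exp (- (mu * n))\<bar> \<le> mu * n - mu * real (n - k)"
    using mu kn by (intro exp_diff) auto
  moreover have "eneg (ennreal mu * ennreal_of_enat h) = exp (-(mu*n))" using enat e e2 by simp
  moreover have "eneg (ennreal mu * ennreal_of_enat (h - enat k)) = exp (-(mu*real(n-k)))"
    using enat e[of "n-k"] e2[of "n-k"] by simp
  moreover have "mu * n - mu * real (n - k) = mu * k" using kn by (simp add: of_nat_diff algebra_simps)
  ultimately show ?thesis by (simp add: abs_minus_commute)
next
  case infinity
  then show ?thesis using mu by (simp add: eneg_def ennreal_mult_top)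
qed

lemma set_pred_countable:
  assumes t: "t \<in> measurable M (count_space UNIV)" and h: "h \<in> measurable M (count_space UNIV)"
  shows "{x \<in> space M. Q (t x :: 'b :: countable) (h x :: 'c)} \<in> sets M"
proof -
  have "(\<lambda>x. (\<lambda>i x. Q i (h x)) (t x) x) \<in> measurable M (count_space UNIV)"
    by (rule measurable_compose_countable[OF _ t]) (rule measurable_compose[OF h], simp)
  then show ?thesis by (intro predE) (simp add: pred_def)
qed



lemma admissible_from:
  fixes R :: "nat \<Rightarrow> 'a \<Rightarrow> nat \<Rightarrow> ennreal"
  assumes nuP: "\<And>l. prob_space (\<nu> l)"
  and chib: "\<And>j s. \<bar>chi j s\<bar> \<le> 1"
  and fm: "\<And>l j. (\<lambda>x. chi j (R l x)) \<in> borel_measurable (\<nu> l)"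
  and gm: "\<And>l j. (\<lambda>x. chi j (R l ((T ^^ \<tau> l x) x))) \<in> borel_measurable (\<nu> l)"
  and conv: "\<And>j \<epsilon>. \<epsilon> > 0 \<Longrightarrow> \<exists>c B. 0 \<le> c \<and> c < \<epsilon> \<and>
       (\<forall>l. B l \<in> sets (\<nu> l) \<and> (\<forall>x\<in>space (\<nu> l). x \<notin> B l \<longrightarrow>
            \<bar>chi j (R l x) - chi j (R l ((T ^^ \<tau> l x) x))\<bar> \<le> c)) \<and>
       (\<lambda>l. measure (\<nu> l) (B l)) \<longlonglongrightarrow> 0"
  shows "admissible_delay T chi R \<nu> \<tau>"
  unfolding admissible_delay_def DE_def
proof (rule series_tendsto)
  fix l j
  show "\<bar>(\<integral>x. chi j (R l x) \<partial>\<nu> l) - (\<integral>x. chi j (R l ((T ^^ \<tau> l x) x)) \<partial>\<nu> l)\<bar> \<le> 2"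
    using int_diff_bound[OF nuP[of l] fm[of j l] gm[of j l] chib chib, of "space (\<nu> l)" 0]
    by (simp add: prob_space.prob_space[OF nuP])
next
  fix j
  show "(\<lambda>l. (\<integral>x. chi j (R l x) \<partial>\<nu> l) - (\<integral>x. chi j (R l ((T ^^ \<tau> l x) x)) \<partial>\<nu> l)) \<longlonglongrightarrow> 0"
  proof (rule tendstoI)
    fix \<epsilon> :: real assume e: "\<epsilon> > 0"
    obtain c B where c: "0 \<le> c" "c < \<epsilon>" and B: "\<And>l. B l \<in> sets (\<nu> l)"
      and d: "\<And>l x. x \<in> space (\<nu> l) \<Longrightarrow> x \<notin> B l \<Longrightarrow> \<bar>chi j (R l x) - chi j (R l ((T ^^ \<tau> l x) x))\<bar> \<le> c"
      and lim: "(\<lambda>l. measure (\<nu> l) (B l)) \<longlonglongrightarrow> 0"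
      using conv[OF e, of j] by blast
    have "\<forall>\<^sub>F l in sequentially. dist (measure (\<nu> l) (B l)) 0 < (\<epsilon> - c) / 2"
      using c by (intro tendstoD[OF lim]) simp
    then show "\<forall>\<^sub>F l in sequentially. dist ((\<integral>x. chi j (R l x) \<partial>\<nu> l) - (\<integral>x. chi j (R l ((T ^^ \<tau> l x) x)) \<partial>\<nu> l)) 0 < \<epsilon>"
    proof eventually_elim
      case (elim l)
      have "\<bar>(\<integral>x. chi j (R l x) \<partial>\<nu> l) - (\<integral>x. chi j (R l ((T ^^ \<tau> l x) x)) \<partial>\<nu> l)\<bar> \<le> 2 * measure (\<nu> l) (B l) + c"
        by (rule int_diff_bound[OF nuP fm gm chib chib B c(1) d])
      then show ?case using elim by (simp add: dist_real_def)
    qed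
  qed
qed

theorem mainTheorem14:
  fixes M :: "'a measure" and T :: "'a \<Rightarrow> 'a" and A :: "nat \<Rightarrow> 'a set"
    and \<nu> :: "nat \<Rightarrow> 'a measure" and \<tau> :: "nat \<Rightarrow> 'a \<Rightarrow> nat"
  assumes "prob_space M"
    and "measure_preserving_map M T"
    and "asymp_rare M A"
    and "\<forall>l. \<nu> l \<in> Pfrak M"
    and "\<forall>l. \<tau> l \<in> measurable M (count_space UNIV)"
  shows "(((\<forall>e>0. (\<lambda>l. measure (\<nu> l)
                {x \<in> space (\<nu> l). measure M (A l) * real (\<tau> l x) > e}) \<longlonglongrightarrow> 0)
          \<and> (\<lambda>l. measure (\<nu> l) {x \<in> space (\<nu> l). enat (\<tau> l x) < hit T (A l) x}) \<longlonglongrightarrow> 1)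
         \<longrightarrow> (\<forall>chi. chi_system chi \<longrightarrow>
               admissible_delay T chi
                 (\<lambda>l x j. ennreal (measure M (A l)) * ennreal_of_enat (Phi T (A l) x j))
                 \<nu> \<tau>))
       \<and> (((\<lambda>l. measure (\<nu> l) {x \<in> space (\<nu> l). enat (\<tau> l x) < hit T (A l) x}) \<longlonglongrightarrow> 1)
         \<longrightarrow> (\<forall>chi. chi_system chi \<longrightarrow>
               admissible_delay T chi
                 (\<lambda>l x j. ennreal (measure M (A l))
                           * ennreal_of_enat (Phi T (A l) (retmap T (A l) x) j))
                 \<nu> \<tau>))"
proof -
  have T: "T \<in> measurable M M" using assms(2) unfolding measure_preserving_map_def by simp
  have Asets: "\<And>l. A l \<in> sets M" and mupos: "\<And>l. 0 < measure M (A l)"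
    using assms(3) unfolding asymp_rare_def by auto
  have nuP: "\<And>l. prob_space (\<nu> l)" and nus: "\<And>l. sets (\<nu> l) = sets M"
    using assms(4) unfolding Pfrak_def by auto
  have nusp: "\<And>l. space (\<nu> l) = space M" using nus sets_eq_imp_space_eq by blast
  have mcong: "\<And>l N. measurable (\<nu> l) N = measurable M N"
    using nus by (intro measurable_cong_sets) auto
  have tau: "\<And>l. \<tau> l \<in> measurable M (count_space UNIV)" using assms(5) by auto
  have shiftm: "\<And>l. (\<lambda>x. (T ^^ \<tau> l x) x) \<in> measurable M M" using shift_meas[OF T tau] .
  let ?G = "\<lambda>l. {x\<in>space (\<nu> l). enat (\<tau> l x) < hit T (A l) x}"
  have good: "\<And>l. ?G l \<in> sets (\<nu> l)"
    unfolding nus nusp by (rule set_pred_countable[OF tau hit_meas[OF T Asets]])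
  define B1 where "B1 l = space (\<nu> l) - ?G l" for l
  have B1s: "B1 l \<in> sets (\<nu> l)" for l unfolding B1_def using good by auto
  have B1lim: "(\<lambda>l. measure (\<nu> l) (B1 l)) \<longlonglongrightarrow> 0"
    if h: "(\<lambda>l. measure (\<nu> l) (?G l)) \<longlonglongrightarrow> 1"
  proof -
    have "measure (\<nu> l) (B1 l) = 1 - measure (\<nu> l) (?G l)" for l
      unfolding B1_def by (rule prob_space.prob_compl[OF nuP good])
    moreover have "(\<lambda>l. 1 - measure (\<nu> l) (?G l)) \<longlonglongrightarrow> 1 - 1"
      by (intro tendsto_diff tendsto_const h)
    ultimately show ?thesis by simp
  qed
  have B1good: "enat (\<tau> l x) < hit T (A l) x" if "x \<in> space (\<nu> l)" "x \<notin> B1 l" for l x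
    using that unfolding B1_def by auto
  show ?thesis
  proof (intro conjI impI allI)
    fix chi assume chi: "chi_system chi"
    then have chib: "\<And>j s. \<bar>chi j s\<bar> \<le> 1" and lip: "\<And>j. seq_lipschitz (chi j)"
      unfolding chi_system_def by auto
    assume hG: "(\<lambda>l. measure (\<nu> l) (?G l)) \<longlonglongrightarrow> 1"
    show "admissible_delay T chi
                 (\<lambda>l x j. ennreal (measure M (A l))
                           * ennreal_of_enat (Phi T (A l) (retmap T (A l) x) j)) \<nu> \<tau>"
    proof (rule admissible_from[OF nuP chib])
      fix l j
      show "(\<lambda>x. chi j (\<lambda>j. ennreal (measure M (A l)) * ennreal_of_enat (Phi T (A l) (retmap T (A l) x) j)))
            \<in> borel_measurable (\<nu> l)"
        unfolding mcong
        by (rule chi_meas[OF lip measurable_compose[OF retmap_meas[OF T Asets] Phi_meas[OF T Asets]]])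
      show "(\<lambda>x. chi j (\<lambda>j. ennreal (measure M (A l)) * ennreal_of_enat (Phi T (A l) (retmap T (A l) ((T ^^ \<tau> l x) x)) j)))
            \<in> borel_measurable (\<nu> l)"
        unfolding mcong
        by (rule chi_meas[OF lip measurable_compose[OF shiftm measurable_compose[OF retmap_meas[OF T Asets] Phi_meas[OF T Asets]]]])
    next
      fix j and \<epsilon> :: real assume e: "\<epsilon> > 0"
      show "\<exists>c B. 0 \<le> c \<and> c < \<epsilon> \<and>
       (\<forall>l. B l \<in> sets (\<nu> l) \<and> (\<forall>x\<in>space (\<nu> l). x \<notin> B l \<longrightarrow>
            \<bar>chi j (\<lambda>j. ennreal (measure M (A l)) * ennreal_of_enat (Phi T (A l) (retmap T (A l) x) j))
             - chi j (\<lambda>j. ennreal (measure M (A l)) * ennreal_of_enat (Phi T (A l) (retmap T (A l) ((T ^^ \<tau> l x) x)) j))\<bar> \<le> c)) \<and>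
       (\<lambda>l. measure (\<nu> l) (B l)) \<longlonglongrightarrow> 0"
        using e B1s B1lim[OF hG] by (intro exI[of _ 0] exI[of _ B1]) (auto simp: hit_shift(2)[OF B1good])
    qed
  next
    fix chi assume chi: "chi_system chi"
    then have chib: "\<And>j s. \<bar>chi j s\<bar> \<le> 1" and lip: "\<And>j. seq_lipschitz (chi j)"
      unfolding chi_system_def by auto
    assume h: "(\<forall>e>0. (\<lambda>l. measure (\<nu> l)
                {x \<in> space (\<nu> l). measure M (A l) * real (\<tau> l x) > e}) \<longlonglongrightarrow> 0)
          \<and> (\<lambda>l. measure (\<nu> l) (?G l)) \<longlonglongrightarrow> 1"
    show "admissible_delay T chi
                 (\<lambda>l x j. ennreal (measure M (A l)) * ennreal_of_enat (Phi T (A l) x j)) \<nu> \<tau>"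
    proof (rule admissible_from[OF nuP chib])
      fix l j
      show "(\<lambda>x. chi j (\<lambda>j. ennreal (measure M (A l)) * ennreal_of_enat (Phi T (A l) x j)))
            \<in> borel_measurable (\<nu> l)"
        unfolding mcong
        by (rule chi_meas[OF lip Phi_meas[OF T Asets]])
      show "(\<lambda>x. chi j (\<lambda>j. ennreal (measure M (A l)) * ennreal_of_enat (Phi T (A l) ((T ^^ \<tau> l x) x) j)))
            \<in> borel_measurable (\<nu> l)"
        unfolding mcong
        by (rule chi_meas[OF lip measurable_compose[OF shiftm Phi_meas[OF T Asets]]])
    next
      fix j and \<epsilon> :: real assume e: "\<epsilon> > 0"
      obtain L where L: "L \<ge> 0" "\<And>s t. \<bar>chi j s - chi j t\<bar> \<le> L * seq_dist s t"
        using lip_bound[OF lip] by blast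
      define e where "e = \<epsilon> / (L + 1)"
      have epos: "e > 0" unfolding e_def using e L by simp
      have Le: "L * e \<le> \<epsilon>" unfolding e_def using e L by (simp add: field_simps)
      define B2 where "B2 l = {x \<in> space (\<nu> l). measure M (A l) * real (\<tau> l x) > e}" for l
      have B2s: "B2 l \<in> sets (\<nu> l)" for l
        unfolding B2_def nus nusp by (rule set_pred_countable[OF tau tau])
      have B2lim: "(\<lambda>l. measure (\<nu> l) (B2 l)) \<longlonglongrightarrow> 0" using h epos unfolding B2_def by blast
      define B where "B l = B1 l \<union> B2 l" for l
      have Bs: "B l \<in> sets (\<nu> l)" for l unfolding B_def using B1s B2s by auto
      have Blim: "(\<lambda>l. measure (\<nu> l) (B l)) \<longlonglongrightarrow> 0"
      proof (rule tendsto_sandwich[where f="\<lambda>_. 0" and h="\<lambda>l. measure (\<nu> l) (B1 l) + measure (\<nu> l) (B2 l)"])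
        show "\<forall>\<^sub>F n in sequentially. 0 \<le> measure (\<nu> n) (B n)" by simp
        show "\<forall>\<^sub>F n in sequentially. measure (\<nu> n) (B n) \<le> measure (\<nu> n) (B1 n) + measure (\<nu> n) (B2 n)"
          unfolding B_def using B1s B2s by (intro always_eventually allI measure_Un_le)
        show "(\<lambda>n. measure (\<nu> n) (B1 n) + measure (\<nu> n) (B2 n)) \<longlonglongrightarrow> 0"
          using tendsto_add[OF B1lim[OF conjunct2[OF h]] B2lim] by simp
      qed simp
      have pw: "\<bar>chi j (\<lambda>j. ennreal (measure M (A l)) * ennreal_of_enat (Phi T (A l) x j))
             - chi j (\<lambda>j. ennreal (measure M (A l)) * ennreal_of_enat (Phi T (A l) ((T ^^ \<tau> l x) x) j))\<bar> \<le> \<epsilon> / 2"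
        if x: "x \<in> space (\<nu> l)" "x \<notin> B l" for l x
      proof -
        let ?mu = "measure M (A l)"
        let ?s = "\<lambda>j. ennreal ?mu * ennreal_of_enat (Phi T (A l) x j)"
        let ?t = "\<lambda>j. ennreal ?mu * ennreal_of_enat (Phi T (A l) ((T ^^ \<tau> l x) x) j)"
        have lt: "enat (\<tau> l x) < hit T (A l) x" using B1good x unfolding B_def by auto
        have small: "?mu * real (\<tau> l x) \<le> e" using x unfolding B_def B2_def by auto
        have "seq_dist ?s ?t = 1/2 * \<bar>eneg (?s 0) - eneg (?t 0)\<bar>"
          by (rule seq_dist_first) (simp add: Phi_Suc hit_shift(2)[OF lt])
        also have "\<bar>eneg (?s 0) - eneg (?t 0)\<bar> \<le> ?mu * real (\<tau> l x)"
          using eneg_coord0[OF mupos lt] by (simp add: Phi_def hit_shift(1)[OF lt])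
        finally have "seq_dist ?s ?t \<le> e / 2" using small by simp
        then have "L * seq_dist ?s ?t \<le> L * (e / 2)" using L(1) by (rule mult_left_mono)
        then show ?thesis using L(2)[of ?s ?t] Le by simp
      qed
      show "\<exists>c B. 0 \<le> c \<and> c < \<epsilon> \<and>
       (\<forall>l. B l \<in> sets (\<nu> l) \<and> (\<forall>x\<in>space (\<nu> l). x \<notin> B l \<longrightarrow>
            \<bar>chi j (\<lambda>j. ennreal (measure M (A l)) * ennreal_of_enat (Phi T (A l) x j))
             - chi j (\<lambda>j. ennreal (measure M (A l)) * ennreal_of_enat (Phi T (A l) ((T ^^ \<tau> l x) x) j))\<bar> \<le> c)) \<and>
       (\<lambda>l. measure (\<nu> l) (B l)) \<longlonglongrightarrow> 0"
        using e Bs Blim pw by (intro exI[of _ "\<epsilon> / 2"] exI[of _ B]) simp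
    qed
  qed
qed


end
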